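(* The continued fraction \[ 80-\cfrac{64}{17+\cfrac{3^4}{32+\cfrac{5^4}{48+\cfrac{7^4}{64+\cdots}}}}, \] i.e. with $a(0)=80$, $a(1)=17$, $a(n)=16n$ for $n\ge2$, $b(0)=-64$, $b(n)=(2n+1)^4$ for $n\ge1$, converges to $\left(\Gamma(1/4)/\Gamma(3/4)\right)^4$.
   Context: The value of the continued fraction with partial denominators $a(n)$ and partial numerators $b(n)$ is $a(0)+\cfrac{b(0)}{a(1)+\cfrac{b(1)}{a(2)+\cdots}}$. *)

theory Defs
  imports "HOL-Analysis.Analysis"
begin

fun cf_tail :: "(nat \<Rightarrow> real) \<Rightarrow> (nat \<Rightarrow> real) \<Rightarrow> nat \<Rightarrow> nat \<Rightarrow> real" where
  "cf_tail a b 0 k = a k"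
| "cf_tail a b (Suc m) k = a k + b k / cf_tail a b m (Suc k)"

definition cf_convergent :: "(nat \<Rightarrow> real) \<Rightarrow> (nat \<Rightarrow> real) \<Rightarrow> nat \<Rightarrow> real" where
  "cf_convergent a b n = cf_tail a b n 0"

definition cf_converges_to :: "(nat \<Rightarrow> real) \<Rightarrow> (nat \<Rightarrow> real) \<Rightarrow> real \<Rightarrow> bool" where
  "cf_converges_to a b L \<longleftrightarrow> (cf_convergent a b \<longlonglongrightarrow> L)"

definition cfA :: "nat \<Rightarrow> real" where
  "cfA n = (if n = 0 then 80 else if n = 1 then 17 else 16 * real n)"

definition cfB :: "nat \<Rightarrow> real" where
  "cfB n = (if n = 0 then -64 else (2 * real n + 1) ^ 4)"

end

theory Submission imports Defs "HOL-Real_Asymp.Real_Asymp" begin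



definition Pi3 :: "nat \<Rightarrow> real" where "Pi3 m = (\<Prod>j<m. (4 * real j + 3) ^ 4)"
definition Pi1 :: "nat \<Rightarrow> real" where "Pi1 m = (\<Prod>j<m. (4 * real j + 5) ^ 4)"

definition pp :: "nat \<Rightarrow> real" where
  "pp n = 16 * Pi3 (n div 2) * (if even n then (2 * real n + 2)^2 + 1 else (2 * real n + 1)^4)"
definition qq :: "nat \<Rightarrow> real" where
  "qq n = Pi1 (n div 2) * (if even n then 1 else (2 * real n + 2)^2 + 1)"
definition pm :: "nat \<Rightarrow> real" where "pm n = (if n = 0 then 1 else pp (n - 1))"
definition qm :: "nat \<Rightarrow> real" where "qm n = (if n = 0 then 0 else qq (n - 1))"

lemma Pi3_Suc: "Pi3 (Suc m) = Pi3 m * (4 * real m + 3) ^ 4" by (simp add: Pi3_def)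
lemma Pi1_Suc: "Pi1 (Suc m) = Pi1 m * (4 * real m + 5) ^ 4" by (simp add: Pi1_def)
lemma Pi3_pos: "Pi3 m > 0" by (simp add: Pi3_def prod_pos)
lemma Pi1_pos: "Pi1 m > 0" by (simp add: Pi1_def prod_pos)
lemma qq_pos: "qq n > 0" using Pi1_pos[of "n div 2"] by (simp add: qq_def add_pos_nonneg)
lemma pp_pos: "pp n > 0" using Pi3_pos[of "n div 2"] by (simp add: pp_def add_pos_nonneg)

lemma pp_rec: "pp (Suc n) = cfA (Suc n) * pp n + cfB n * pm n"
proof (cases "n = 0")
  case True then show ?thesis by (simp add: pp_def pm_def cfA_def cfB_def Pi3_def)
next
  case False
  show ?thesis
  proof (cases "even n")
    case True
    then obtain m where m: "n = 2 * m" by (auto elim: evenE)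
    with False obtain k where k: "m = Suc k" by (cases m) auto
    have "pp (Suc n) = 16 * Pi3 k * (4*real k+3)^4 * (4 * real k + 7)^4"
      by (simp add: pp_def m k Pi3_Suc algebra_simps)
    moreover have "pp n = 16 * Pi3 k * (4*real k+3)^4 * ((4 * real k + 6)^2 + 1)"
      by (simp add: pp_def m k Pi3_Suc algebra_simps)
    moreover have "pm n = 16 * Pi3 k * (4*real k+3)^4"
      using k by (simp add: pm_def pp_def m k Pi3_Suc algebra_simps)
    moreover have "cfA (Suc n) = 16 * (2 * real k + 3)" "cfB n = (4 * real k + 5)^4"
      by (simp_all add: cfA_def cfB_def m k algebra_simps)
    ultimately show ?thesis by (simp add: algebra_simps power2_eq_square power4_eq_xxxx)
  next
    case odd: False
    then obtain m where m: "n = 2 * m + 1" by (auto elim: oddE)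
    have "pp (Suc n) = 16 * Pi3 m * (4*real m+3)^4 * ((4 * real m + 6)^2 + 1)"
      by (simp add: pp_def m Pi3_Suc algebra_simps)
    moreover have "pp n = 16 * Pi3 m * (4*real m+3)^4"
      by (simp add: pp_def m Pi3_Suc algebra_simps)
    moreover have "pm n = 16 * Pi3 m * ((4 * real m + 2)^2 + 1)"
      by (simp add: pm_def pp_def m algebra_simps)
    moreover have "cfA (Suc n) = 16 * (2 * real m + 2)" "cfB n = (4 * real m + 3)^4"
      by (simp_all add: cfA_def cfB_def m algebra_simps)
    ultimately show ?thesis by (simp add: algebra_simps power2_eq_square power4_eq_xxxx)
  qed
qed

lemma qq_rec: "qq (Suc n) = cfA (Suc n) * qq n + cfB n * qm n"
proof (cases "n = 0")
  case True then show ?thesis by (simp add: qq_def qm_def cfA_def cfB_def Pi1_def)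
next
  case False
  show ?thesis
  proof (cases "even n")
    case True
    then obtain m where m: "n = 2 * m" by (auto elim: evenE)
    with False obtain k where k: "m = Suc k" by (cases m) auto
    have "qq (Suc n) = Pi1 k * (4*real k+5)^4 * ((4 * real k + 8)^2 + 1)"
      by (simp add: qq_def m k Pi1_Suc algebra_simps)
    moreover have "qq n = Pi1 k * (4*real k+5)^4"
      by (simp add: qq_def m k Pi1_Suc algebra_simps)
    moreover have "qm n = Pi1 k * ((4 * real k + 4)^2 + 1)"
      using k by (simp add: qm_def qq_def m k algebra_simps)
    moreover have "cfA (Suc n) = 16 * (2 * real k + 3)" "cfB n = (4 * real k + 5)^4"
      by (simp_all add: cfA_def cfB_def m k algebra_simps)
    ultimately show ?thesis by (simp add: algebra_simps power2_eq_square power4_eq_xxxx)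
  next
    case odd: False
    then obtain m where m: "n = 2 * m + 1" by (auto elim: oddE)
    have "qq (Suc n) = Pi1 m * (4*real m+5)^4"
      by (simp add: qq_def m Pi1_Suc algebra_simps)
    moreover have "qq n = Pi1 m * ((4 * real m + 4)^2 + 1)"
      by (simp add: qq_def m algebra_simps)
    moreover have "qm n = Pi1 m"
      by (simp add: qm_def qq_def m algebra_simps)
    moreover have "cfA (Suc n) = 16 * (2 * real m + 2)" "cfB n = (4 * real m + 3)^4"
      by (simp_all add: cfA_def cfB_def m algebra_simps)
    ultimately show ?thesis by (simp add: algebra_simps power2_eq_square power4_eq_xxxx)
  qed
qed




fun ctx :: "nat \<Rightarrow> nat \<Rightarrow> real \<Rightarrow> real" where
  "ctx 0 k x = x"
| "ctx (Suc n) k x = cfA k + cfB k / ctx n (Suc k) x"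

lemma cf_tail_ctx: "cf_tail cfA cfB n k = ctx n k (cfA (k + n))"
  by (induction n arbitrary: k) auto

lemma ctx_Suc': "ctx (Suc n) k x = ctx n k (cfA (k + n) + cfB (k + n) / x)"
  by (induction n arbitrary: k) auto

lemma cfA_pos: "k \<ge> 1 \<Longrightarrow> cfA k > 0" by (simp add: cfA_def)
lemma cfB_pos: "k \<ge> 1 \<Longrightarrow> cfB k > 0" by (simp add: cfB_def)

lemma moebius:
  "x > 0 \<Longrightarrow> ctx (Suc n) 0 x = (pp n * x + cfB n * pm n) / (qq n * x + cfB n * qm n)"
proof (induction n arbitrary: x)
  case 0
  then show ?case by (simp add: pp_def qq_def pm_def qm_def Pi3_def Pi1_def cfA_def cfB_def field_simps)
next
  case (Suc n)
  define y where "y = cfA (Suc n) + cfB (Suc n) / x"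
  have y: "y > 0" using Suc.prems cfA_pos[of "Suc n"] cfB_pos[of "Suc n"] by (simp add: y_def add_pos_pos)
  have "ctx (Suc (Suc n)) 0 x = ctx (Suc n) 0 y" by (subst ctx_Suc') (simp add: y_def)
  also have "\<dots> = (pp n * y + cfB n * pm n) / (qq n * y + cfB n * qm n)" using Suc.IH[OF y] .
  also have "\<dots> = (pp (Suc n) * x + cfB (Suc n) * pm (Suc n)) / (qq (Suc n) * x + cfB (Suc n) * qm (Suc n))"
  proof -
    have xn: "x \<noteq> 0" using Suc.prems by simp
    have e1: "pp n * y + cfB n * pm n = (pp (Suc n) * x + cfB (Suc n) * pp n) / x"
      using xn by (simp add: y_def pp_rec field_simps)
    have e2: "qq n * y + cfB n * qm n = (qq (Suc n) * x + cfB (Suc n) * qq n) / x"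
      using xn by (simp add: y_def qq_rec field_simps)
    show ?thesis unfolding e1 e2 using xn by (simp add: pm_def qm_def)
  qed
  finally show ?case .
qed

lemma convergent_eq: "cf_convergent cfA cfB n = pp n / qq n"
proof (cases n)
  case 0 then show ?thesis by (simp add: cf_convergent_def pp_def qq_def Pi3_def Pi1_def cfA_def)
next
  case (Suc m)
  have "cf_convergent cfA cfB n = ctx (Suc m) 0 (cfA (Suc m))"
    by (simp add: cf_convergent_def cf_tail_ctx Suc)
  also have "\<dots> = pp (Suc m) / qq (Suc m)"
    by (subst moebius) (simp_all add: cfA_pos pp_rec qq_rec mult.commute)
  finally show ?thesis by (simp add: Suc)
qed




lemma Pi3_poch: "Pi3 m = (4 ^ m * pochhammer (3/4) m) ^ 4"
proof (induction m)
  case 0 then show ?case by (simp add: Pi3_def)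
next
  case (Suc m)
  have "4 ^ Suc m * pochhammer (3/4::real) (Suc m) = 4 ^ m * pochhammer (3/4) m * (4 * real m + 3)"
    by (simp add: pochhammer_Suc algebra_simps)
  then show ?case by (simp only: Pi3_Suc Suc.IH power_mult_distrib)
qed
lemma Pi1_poch: "Pi1 m = (4 ^ m * pochhammer (5/4) m) ^ 4"
proof (induction m)
  case 0 then show ?case by (simp add: Pi1_def)
next
  case (Suc m)
  have "4 ^ Suc m * pochhammer (5/4::real) (Suc m) = 4 ^ m * pochhammer (5/4) m * (4 * real m + 5)"
    by (simp add: pochhammer_Suc algebra_simps)
  then show ?case by (simp only: Pi1_Suc Suc.IH power_mult_distrib)
qed

lemma poch_GS:
  fixes z :: real assumes "z > 0"
  shows "pochhammer z (Suc n) = fact n * exp (z * ln (real n)) / Gamma_series z n"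
proof -
  have "pochhammer z (n+1) > 0" using assms by (simp add: pochhammer_pos)
  then show ?thesis by (simp add: Gamma_series_def)
qed

lemma R_eq:
  assumes "n > 0"
  shows "Pi3 (Suc n) / Pi1 (Suc n) * (real n)^2 = (Gamma_series (5/4) n / Gamma_series (3/4) n) ^ 4"
proof -
  have g3: "Gamma_series (3/4::real) n > 0"
    by (simp add: Gamma_series_def pochhammer_pos)
  have g5: "Gamma_series (5/4::real) n > 0"
    by (simp add: Gamma_series_def pochhammer_pos)
  have "Pi3 (Suc n) / Pi1 (Suc n) = (pochhammer (3/4) (Suc n) / pochhammer (5/4) (Suc n)) ^ 4"
    by (simp add: Pi3_poch Pi1_poch power_divide power_mult_distrib)
  also have "pochhammer (3/4) (Suc n) / pochhammer (5/4) (Suc n) =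
      exp ((3/4) * ln (real n)) / exp ((5/4) * ln (real n)) * (Gamma_series (5/4) n / Gamma_series (3/4) n)"
  proof -
    have a3: "pochhammer (3/4::real) (Suc n) = fact n * exp ((3/4) * ln (real n)) / Gamma_series (3/4) n"
      by (rule poch_GS) simp
    have a5: "pochhammer (5/4::real) (Suc n) = fact n * exp ((5/4) * ln (real n)) / Gamma_series (5/4) n"
      by (rule poch_GS) simp
    show ?thesis unfolding a3 a5 using g3 g5 by (simp add: field_simps)
  qed
  also have "exp ((3/4) * ln (real n)) / exp ((5/4) * ln (real n)) = exp (- (1/2) * ln (real n))"
    by (simp add: exp_diff[symmetric] algebra_simps)
  finally have "Pi3 (Suc n) / Pi1 (Suc n) * (real n)^2 =
      (exp (- (1/2) * ln (real n)))^4 * (real n)^2 * (Gamma_series (5/4) n / Gamma_series (3/4) n) ^ 4"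
    by (simp only: power_mult_distrib mult_ac)
  also have "(exp (- (1/2) * ln (real n)))^4 = exp (- 2 * ln (real n))"
    by (simp add: exp_of_nat_mult[symmetric])
  also have "exp (- 2 * ln (real n)) * (real n)^2 = 1"
  proof -
    have "exp (2 * ln (real n)) = exp (ln (real n) + ln (real n))" by simp
    also have "\<dots> = (real n)^2" using assms by (simp only: exp_add) (simp add: power2_eq_square)
    finally show ?thesis using assms by (simp add: exp_minus field_simps)
  qed
  finally show ?thesis by simp
qed

definition K :: real where "K = (Gamma (5/4) / Gamma (3/4)) ^ 4"

lemma R_lim: "(\<lambda>n. Pi3 (Suc n) / Pi1 (Suc n) * (real n)^2) \<longlonglongrightarrow> K"
proof -
  have "Gamma (3/4::real) \<noteq> 0" by (rule Gamma_nonzero) auto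
  then have "(\<lambda>n. (Gamma_series (5/4) n / Gamma_series (3/4::real) n) ^ 4) \<longlonglongrightarrow> K"
    unfolding K_def by (intro tendsto_intros)
  moreover have "eventually (\<lambda>n. (Gamma_series (5/4) n / Gamma_series (3/4::real) n) ^ 4 =
      Pi3 (Suc n) / Pi1 (Suc n) * (real n)^2) sequentially"
    using eventually_gt_at_top[of 0] by eventually_elim (simp add: R_eq[symmetric])
  ultimately show ?thesis by (rule Lim_transform_eventually)
qed

lemma L_eq: "(Gamma (1/4) / Gamma (3/4)) ^ 4 = 256 * K"
proof -
  have "Gamma (5/4::real) = Gamma (1/4 + 1)" by simp
  also have "\<dots> = 1/4 * Gamma (1/4)" by (subst Gamma_plus1) auto
  finally have "Gamma (1/4::real) = 4 * Gamma (5/4)" by simp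
  then show ?thesis by (simp add: K_def power_divide power_mult_distrib)
qed




lemma my_even_odd:
  assumes "(\<lambda>n. f (2 * n)) \<longlonglongrightarrow> (l :: real)"
      and "(\<lambda>n. f (2 * n + 1)) \<longlonglongrightarrow> l"
  shows "f \<longlonglongrightarrow> l"
proof (rule LIMSEQ_I)
  fix r :: real assume r: "r > 0"
  from LIMSEQ_D[OF assms(1) r] obtain a where a: "\<And>n. n \<ge> a \<Longrightarrow> norm (f (2*n) - l) < r" by blast
  from LIMSEQ_D[OF assms(2) r] obtain b where b: "\<And>n. n \<ge> b \<Longrightarrow> norm (f (2*n+1) - l) < r" by blast
  show "\<exists>no. \<forall>n\<ge>no. norm (f n - l) < r"
  proof (intro exI allI impI)
    fix n assume n: "2 * a + 2 * b \<le> n"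
    show "norm (f n - l) < r"
    proof (cases "even n")
      case True
      then obtain k where k: "n = 2 * k" by (auto elim: evenE)
      with n have "k \<ge> a" by simp
      then show ?thesis using a[of k] k by simp
    next
      case False
      then obtain k where k: "n = 2 * k + 1" by (auto elim: oddE)
      with n have "k \<ge> b" by simp
      then show ?thesis using b[of k] k by simp
    qed
  qed
qed

lemma lim1: "(\<lambda>n. ((4 * real n + 6)^2 + 1) / (real n)^2) \<longlonglongrightarrow> 16"
  by real_asymp
lemma lim2: "(\<lambda>n. (4 * real n + 7)^4 / ((real n)^2 * ((4 * real n + 8)^2 + 1))) \<longlonglongrightarrow> 16"
  by real_asymp

definition c :: "nat \<Rightarrow> real" where "c n = pp n / qq n"

lemma even_lim: "(\<lambda>n. c (2 * n)) \<longlonglongrightarrow> 256 * K"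
proof -
  have "(\<lambda>n. 16 * (Pi3 (Suc n) / Pi1 (Suc n) * (real n)^2) * (((4 * real n + 6)^2 + 1) / (real n)^2))
      \<longlonglongrightarrow> 16 * K * 16"
    by (intro tendsto_intros R_lim lim1)
  moreover have "eventually (\<lambda>n. 16 * (Pi3 (Suc n) / Pi1 (Suc n) * (real n)^2) * (((4 * real n + 6)^2 + 1) / (real n)^2)
      = c (2 * Suc n)) sequentially"
    using eventually_gt_at_top[of 0]
  proof eventually_elim
    case (elim n)
    have e: "c (2 * Suc n) = 16 * Pi3 (Suc n) * ((4 * real n + 6)^2 + 1) / Pi1 (Suc n)"
      by (simp add: c_def pp_def qq_def algebra_simps)
    moreover have "(real n)^2 \<noteq> 0" "Pi1 (Suc n) \<noteq> 0" using elim Pi1_pos[of "Suc n"] by auto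
    ultimately show ?case unfolding e by (simp add: field_simps)
  qed
  ultimately have "(\<lambda>n. c (2 * Suc n)) \<longlonglongrightarrow> 256 * K"
    by (auto dest: Lim_transform_eventually)
  then show ?thesis by (rule LIMSEQ_imp_Suc[where f = "\<lambda>n. c (2 * n)"])
qed

lemma odd_lim: "(\<lambda>n. c (2 * n + 1)) \<longlonglongrightarrow> 256 * K"
proof -
  have "(\<lambda>n. 16 * (Pi3 (Suc n) / Pi1 (Suc n) * (real n)^2) * ((4 * real n + 7)^4 / ((real n)^2 * ((4 * real n + 8)^2 + 1))))
      \<longlonglongrightarrow> 16 * K * 16"
    by (intro tendsto_intros R_lim lim2)
  moreover have "eventually (\<lambda>n. 16 * (Pi3 (Suc n) / Pi1 (Suc n) * (real n)^2) * ((4 * real n + 7)^4 / ((real n)^2 * ((4 * real n + 8)^2 + 1)))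
      = c (2 * Suc n + 1)) sequentially"
    using eventually_gt_at_top[of 0]
  proof eventually_elim
    case (elim n)
    have e: "c (2 * Suc n + 1) = 16 * Pi3 (Suc n) * (4 * real n + 7)^4 / (Pi1 (Suc n) * ((4 * real n + 8)^2 + 1))"
      by (simp add: c_def pp_def qq_def algebra_simps)
    have gen: "\<And>n2 P1 P3 X Y. n2 \<noteq> 0 \<Longrightarrow> P1 \<noteq> 0 \<Longrightarrow> Y \<noteq> (0::real) \<Longrightarrow>
        16 * (P3 / P1 * n2) * (X / (n2 * Y)) = 16 * P3 * X / (P1 * Y)"
      by (simp add: field_simps)
    have "(4 * real n + 8)^2 + 1 > 0" by (rule add_nonneg_pos) simp_all
    moreover have "(real n)^2 \<noteq> 0" "Pi1 (Suc n) \<noteq> 0"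
      using elim Pi1_pos[of "Suc n"] by auto
    ultimately show ?case unfolding e by (intro gen) auto
  qed
  ultimately have "(\<lambda>n. c (2 * Suc n + 1)) \<longlonglongrightarrow> 256 * K"
    by (auto dest: Lim_transform_eventually)
  then show ?thesis by (rule LIMSEQ_imp_Suc[where f = "\<lambda>n. c (2 * n + 1)"])
qed

theorem mainTheorem2:
  shows "cf_converges_to cfA cfB ((Gamma (1/4) / Gamma (3/4)) ^ 4)"
  unfolding cf_converges_to_def L_eq
proof -
  have "c \<longlonglongrightarrow> 256 * K" by (rule my_even_odd[OF even_lim odd_lim])
  moreover have "cf_convergent cfA cfB = c" by (rule ext) (simp add: convergent_eq c_def)
  ultimately show "cf_convergent cfA cfB \<longlonglongrightarrow> 256 * K" by simp
qed


end
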